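(* Let $\pi\colon(T,X)\to(T,Y)$ be a nontrivial extension of compact metric flows with $(T,Y)$ minimal. Suppose that $\mathtt R_\pi$ has a dense set of a.p. points and that $\pi$ is weakly mixing. Then there exists a residual set $Y_{\mathrm{LY}}\subseteq Y$ such that for every $y\in Y_{\mathrm{LY}}$, the fiber $\pi^{-1}y$ has no isolated points and contains an uncountable subset $B$ which is dense in $\pi^{-1}y$ and is Li-Yorke scrambled for $\pi$ relative to $\mathtt R_\pi$.
   Context: $\mathtt R_\pi=\{(x_1,x_2):\pi x_1=\pi x_2\}$ with diagonal $T$-action; $\Delta_X$ the diagonal; nontrivial means $\mathtt R_\pi\ne\Delta_X$. A point is a.p. if its return-time sets to neighborhoods are syndetic in $T$. $\pi$ is weakly mixing if $(T,\mathtt R_\pi)$ is topologically transitive (for nonempty open $U,V\subseteq\mathtt R_\pi$ some $t$ has $V\cap tU\ne\emptyset$). For closed $L$ with $\Delta_X\subsetneq L\subseteq\mathtt R_\pi$, $(x,x')$ is a Li-Yorke pair for $\pi$ rel. $L$ if $(x,x')\in\mathtt R_\pi$ and $L\subseteq\overline{T(x,x')}$; a set $S\subseteq X$ is Li-Yorke scrambled for $\pi$ rel. $L$ if every $(x,x')\in S\times S$ with $x\ne x'$ is a Li-Yorke pair for $\pi$ rel. $L$. *)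

theory Defs
  imports "HOL-Analysis.Analysis"
begin

text \<open>Flows: a (not necessarily abelian) topological group T, written additively
  (class topological_group_add), acting continuously on a compact space.
  The phase spaces are the whole types 'x, 'y (compact metric: metric_space
  with compact UNIV).\<close>

definition flow :: "('g::topological_group_add \<Rightarrow> 'x::topological_space \<Rightarrow> 'x) \<Rightarrow> bool" where
  "flow act \<longleftrightarrow> (\<forall>x. act 0 x = x) \<and> (\<forall>s t x. act (s + t) x = act s (act t x))
     \<and> continuous_on UNIV (\<lambda>(t, x). act t x)"

definition extension ::
  "('g::topological_group_add \<Rightarrow> 'x::topological_space \<Rightarrow> 'x) \<Rightarrow>
   ('g \<Rightarrow> 'y::topological_space \<Rightarrow> 'y) \<Rightarrow> ('x \<Rightarrow> 'y) \<Rightarrow> bool" where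
  "extension actX actY \<pi> \<longleftrightarrow> continuous_on UNIV \<pi> \<and> surj \<pi> \<and> (\<forall>t x. \<pi> (actX t x) = actY t (\<pi> x))"

definition minimal_flow :: "('g::topological_group_add \<Rightarrow> 'y::topological_space \<Rightarrow> 'y) \<Rightarrow> bool" where
  "minimal_flow act \<longleftrightarrow> (\<forall>M. closed M \<and> M \<noteq> {} \<and> (\<forall>t. act t ` M \<subseteq> M) \<longrightarrow> M = UNIV)"

definition Rpi :: "('x \<Rightarrow> 'y) \<Rightarrow> ('x \<times> 'x) set" where
  "Rpi \<pi> = {(x1, x2). \<pi> x1 = \<pi> x2}"

definition diag_act :: "('g \<Rightarrow> 'x \<Rightarrow> 'x) \<Rightarrow> 'g \<Rightarrow> 'x \<times> 'x \<Rightarrow> 'x \<times> 'x" where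
  "diag_act act t p = (act t (fst p), act t (snd p))"

definition syndetic :: "'g::topological_group_add set \<Rightarrow> bool" where
  "syndetic S \<longleftrightarrow> (\<exists>K. compact K \<and> (\<forall>t. \<exists>k\<in>K. \<exists>s\<in>S. t = k + s))"

definition almost_periodic_pt :: "('g::topological_group_add \<Rightarrow> 'z::topological_space \<Rightarrow> 'z) \<Rightarrow> 'z \<Rightarrow> bool" where
  "almost_periodic_pt act z \<longleftrightarrow> (\<forall>U. open U \<and> z \<in> U \<longrightarrow> syndetic {t. act t z \<in> U})"

text \<open>pi weakly mixing: (T, R_pi) topologically transitive (relatively open subsets of R_pi).\<close>
definition weakly_mixing_ext :: "('g \<Rightarrow> 'x::topological_space \<Rightarrow> 'x) \<Rightarrow> ('x \<Rightarrow> 'y) \<Rightarrow> bool" where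
  "weakly_mixing_ext act \<pi> \<longleftrightarrow>
     (\<forall>U V. openin (top_of_set (Rpi \<pi>)) U \<and> U \<noteq> {} \<and> openin (top_of_set (Rpi \<pi>)) V \<and> V \<noteq> {}
        \<longrightarrow> (\<exists>t. V \<inter> diag_act act t ` U \<noteq> {}))"

definition LY_pair :: "('g \<Rightarrow> 'x::topological_space \<Rightarrow> 'x) \<Rightarrow> ('x \<Rightarrow> 'y) \<Rightarrow> ('x \<times> 'x) set \<Rightarrow> 'x \<Rightarrow> 'x \<Rightarrow> bool" where
  "LY_pair act \<pi> L x x' \<longleftrightarrow> (x, x') \<in> Rpi \<pi> \<and> L \<subseteq> closure (range (\<lambda>t. diag_act act t (x, x')))"

definition LY_scrambled :: "('g \<Rightarrow> 'x::topological_space \<Rightarrow> 'x) \<Rightarrow> ('x \<Rightarrow> 'y) \<Rightarrow> ('x \<times> 'x) set \<Rightarrow> 'x set \<Rightarrow> bool" where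
  "LY_scrambled act \<pi> L S \<longleftrightarrow> (\<forall>x\<in>S. \<forall>x'\<in>S. x \<noteq> x' \<longrightarrow> LY_pair act \<pi> L x x')"

definition residual :: "'a::topological_space set \<Rightarrow> bool" where
  "residual S \<longleftrightarrow> (\<exists>F. countable F \<and> (\<forall>U\<in>F. open U \<and> closure U = UNIV) \<and> \<Inter>F \<subseteq> S)"

end

theory Submission
  imports Defs
begin


lemma shrink_tasks:
  assumes "finite Ts"
    and ach: "\<forall>P\<in>Ts. \<forall>U. Inv U \<longrightarrow> (\<exists>U'. Inv U' \<and> (\<forall>i. U' i \<subseteq> U i) \<and> P U')"
    and down: "\<forall>P\<in>Ts. \<forall>U U'. P U \<and> Inv U' \<and> (\<forall>i. U' i \<subseteq> U i) \<longrightarrow> P U'"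
    and "Inv U0"
  shows "\<exists>U. Inv U \<and> (\<forall>i. U i \<subseteq> U0 i) \<and> (\<forall>P\<in>Ts. P U)"
  using assms(1) ach down
proof (induction Ts)
  case empty
  then show ?case using assms(4) by auto
next
  case (insert P Ts)
  have "\<forall>P\<in>Ts. \<forall>U. Inv U \<longrightarrow> (\<exists>U'. Inv U' \<and> (\<forall>i. U' i \<subseteq> U i) \<and> P U')"
    using insert.prems(1) by blast
  moreover have "\<forall>P\<in>Ts. \<forall>U U'. P U \<and> Inv U' \<and> (\<forall>i. U' i \<subseteq> U i) \<longrightarrow> P U'"
    using insert.prems(2) by blast
  ultimately obtain U where U: "Inv U" "\<forall>i. U i \<subseteq> U0 i" "\<forall>Q\<in>Ts. Q U"
    using insert.IH by blast
  have "\<forall>U. Inv U \<longrightarrow> (\<exists>U'. Inv U' \<and> (\<forall>i. U' i \<subseteq> U i) \<and> P U')"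
    using insert.prems(1) by blast
  then obtain U' where U': "Inv U'" "\<forall>i. U' i \<subseteq> U i" "P U'" using U(1) by blast
  have "\<forall>Q\<in>Ts. Q U'" using insert.prems(2) U U' by blast
  moreover have "\<forall>i. U' i \<subseteq> U0 i" using U(2) U'(2) by blast
  ultimately show ?case using U'(1,3) by blast
qed

lemma open_perfect_infinite:
  fixes F :: "'a::metric_space set"
  assumes "\<forall>x\<in>F. x islimpt F" "open V" "V \<inter> F \<noteq> {}"
  shows "infinite (V \<inter> F)"
proof -
  obtain x where x: "x \<in> V" "x \<in> F" using assms by auto
  then obtain e where e: "e > 0" "ball x e \<subseteq> V" using assms(2) open_contains_ball by blast
  have "infinite (F \<inter> ball x e)" using assms(1) x e islimpt_eq_infinite_ball by blast
  moreover have "F \<inter> ball x e \<subseteq> V \<inter> F" using e by auto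
  ultimately show ?thesis using finite_subset by blast
qed

definition Idx :: "nat \<Rightarrow> (nat \<times> bool list) set" where
  "Idx n = {(j,s). j < n \<and> length s = n}"

lemma finite_Idx: "finite (Idx n)"
proof -
  have "Idx n \<subseteq> {..<n} \<times> {s. set s \<subseteq> (UNIV::bool set) \<and> length s = n}"
    unfolding Idx_def by auto
  moreover have "finite ({..<n} \<times> {s. set s \<subseteq> (UNIV::bool set) \<and> length s = n})"
    by (intro finite_cartesian_product finite_lists_length_eq) auto
  ultimately show ?thesis using finite_subset by blast
qed

definition par :: "(nat \<Rightarrow> 'a set) \<Rightarrow> nat \<Rightarrow> (nat \<times> bool list \<Rightarrow> 'a set) \<Rightarrow> nat \<times> bool list \<Rightarrow> 'a set" where
  "par R n U i = (if fst i < n then U (fst i, butlast (snd i)) else R n)"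

definition good :: "'a::metric_space set \<Rightarrow> (nat \<Rightarrow> ('a\<times>'a) set) \<Rightarrow> (nat \<Rightarrow> 'a set) \<Rightarrow> nat
   \<Rightarrow> (nat \<times> bool list \<Rightarrow> 'a set) \<Rightarrow> (nat \<times> bool list \<Rightarrow> 'a set) \<Rightarrow> bool" where
  "good F W R n U U' \<longleftrightarrow> (\<forall>i\<in>Idx (Suc n). open (U' i) \<and> U' i \<inter> F \<noteq> {} \<and> closure (U' i) \<subseteq> par R n U i)
     \<and> (\<forall>i\<in>Idx (Suc n). \<forall>k\<in>Idx (Suc n). i \<noteq> k \<longrightarrow> U' i \<inter> U' k = {} \<and> (\<forall>m\<le>n. U' i \<times> U' k \<subseteq> W m))"

lemma step_exists:
  fixes F :: "'a::metric_space set"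
  assumes perf: "\<forall>x\<in>F. x islimpt F"
    and dense: "\<forall>m A B. open A \<longrightarrow> open B \<longrightarrow> A \<inter> F \<noteq> {} \<longrightarrow> B \<inter> F \<noteq> {} \<longrightarrow> (\<exists>a\<in>A\<inter>F. \<exists>b\<in>B\<inter>F. (a,b) \<in> W m)"
    and Wo: "\<forall>m. open (W m)"
    and R: "\<forall>n. open (R n) \<and> R n \<inter> F \<noteq> {}"
    and hyp: "\<forall>i\<in>Idx n. open (U i) \<and> U i \<inter> F \<noteq> {}"
  shows "\<exists>U'. good F W R n U U'"
proof -
  define I where "I = Idx (Suc n)"
  define P where "P = par R n U"
  define Inv where "Inv V \<longleftrightarrow> (\<forall>i\<in>I. open (V i) \<and> V i \<inter> F \<noteq> {} \<and> V i \<subseteq> P i)" for V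
  define T1 where "T1 i = (\<lambda>V. closure (V i) \<subseteq> P i)" for i
  define T2 where "T2 = (\<lambda>(i,k,m). (\<lambda>V::nat \<times> bool list \<Rightarrow> 'a set. V i \<inter> V k = {} \<and> V i \<times> V k \<subseteq> W m))"
  define J where "J = {(i,k,m). i\<in>I \<and> k\<in>I \<and> i\<noteq>k \<and> m \<le> n}"
  define Ts where "Ts = T1 ` I \<union> T2 ` J"
  have finI: "finite I" unfolding I_def by (rule finite_Idx)
  have "J \<subseteq> I \<times> I \<times> {..n}" unfolding J_def by auto
  hence finJ: "finite J" using finI finite_subset by blast
  have inv0: "Inv P"
    unfolding Inv_def
  proof
    fix i assume i: "i \<in> I"
    show "open (P i) \<and> P i \<inter> F \<noteq> {} \<and> P i \<subseteq> P i"
    proof (cases "fst i < n")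
      case True
      have "(fst i, butlast (snd i)) \<in> Idx n" using i True unfolding I_def Idx_def by auto
      then show ?thesis using hyp True unfolding P_def par_def by auto
    next
      case False
      then show ?thesis using R unfolding P_def par_def by auto
    qed
  qed
  have ach1: "\<exists>U'. Inv U' \<and> (\<forall>j. U' j \<subseteq> V j) \<and> T1 i U'" if "i \<in> I" "Inv V" for i V
  proof -
    have "open (V i)" "V i \<inter> F \<noteq> {}" "V i \<subseteq> P i" using that unfolding Inv_def by auto
    then obtain a where a: "a \<in> V i" "a \<in> F" by auto
    then obtain e where e: "e > 0" "ball a e \<subseteq> V i" using \<open>open (V i)\<close> open_contains_ball by blast
    define U' where "U' = V(i := ball a (e/2))"
    have sub: "ball a (e/2) \<subseteq> V i" using e by auto
    have "closure (ball a (e/2)) \<subseteq> cball a (e/2)" by (simp add: closure_minimal)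
    also have "\<dots> \<subseteq> ball a e" using e by auto
    finally have cl: "closure (ball a (e/2)) \<subseteq> P i" using e \<open>V i \<subseteq> P i\<close> by auto
    have aa: "a \<in> ball a (e/2) \<inter> F" using a e by simp
    have "Inv U'" using that(2) sub aa \<open>V i \<subseteq> P i\<close> unfolding Inv_def U'_def
      by (auto simp del: Int_iff mem_ball)
    moreover have "\<forall>j. U' j \<subseteq> V j" using sub unfolding U'_def by auto
    moreover have "T1 i U'" using cl unfolding T1_def U'_def by auto
    ultimately show ?thesis by blast
  qed
  have ach2: "\<exists>U'. Inv U' \<and> (\<forall>j. U' j \<subseteq> V j) \<and> T2 (i,k,m) U'" if "(i,k,m) \<in> J" "Inv V" for i k m V
  proof -
    have ik: "i \<in> I" "k \<in> I" "i \<noteq> k" using that unfolding J_def by auto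
    have Vi: "open (V i)" "V i \<inter> F \<noteq> {}" "V i \<subseteq> P i" using that ik unfolding Inv_def by auto
    have Vk: "open (V k)" "V k \<inter> F \<noteq> {}" "V k \<subseteq> P k" using that ik unfolding Inv_def by auto
    obtain a0 where a0: "a0 \<in> V i" "a0 \<in> F" using Vi by auto
    have "infinite (V k \<inter> F)" using open_perfect_infinite[OF perf Vk(1,2)] .
    then have "V k \<inter> F - {a0} \<noteq> {}"
      by (metis Diff_eq_empty_iff finite.emptyI finite.insertI finite_subset)
    then obtain b0 where b0: "b0 \<in> V k \<inter> F" "b0 \<noteq> a0" by blast
    define d where "d = dist a0 b0 / 2"
    have d: "d > 0" using b0 unfolding d_def by auto
    define A1 where "A1 = V i \<inter> ball a0 d"
    define B1 where "B1 = V k \<inter> ball b0 d"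
    have AB1: "A1 \<inter> B1 = {}"
    proof (rule ccontr)
      assume "A1 \<inter> B1 \<noteq> {}"
      then obtain x where "dist a0 x < d" "dist b0 x < d" unfolding A1_def B1_def by auto
      then have "dist a0 b0 < 2*d" by (smt (verit) dist_commute dist_triangle)
      then show False unfolding d_def by simp
    qed
    have oA1: "open A1" "A1 \<inter> F \<noteq> {}" using Vi a0 d unfolding A1_def by auto
    have oB1: "open B1" "B1 \<inter> F \<noteq> {}" using Vk b0 d unfolding B1_def by auto
    obtain a b where ab: "a \<in> A1" "a \<in> F" "b \<in> B1" "b \<in> F" "(a,b) \<in> W m"
      using dense oA1 oB1 by blast
    obtain A' B' where AB': "open A'" "open B'" "(a,b) \<in> A' \<times> B'" "A' \<times> B' \<subseteq> W m"
      using open_prod_elim[OF _ ab(5)] Wo by metis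
    define U' where "U' = V(i := A1 \<inter> A', k := B1 \<inter> B')"
    have "Inv U'" unfolding Inv_def U'_def using that(2) ik AB' ab oA1 oB1 Vi Vk
      unfolding Inv_def A1_def B1_def by auto
    moreover have "\<forall>j. U' j \<subseteq> V j" unfolding U'_def A1_def B1_def by auto
    moreover have "T2 (i,k,m) U'" unfolding T2_def U'_def using ik AB1 AB' by auto
    ultimately show ?thesis by blast
  qed
  have "\<exists>U'. Inv U' \<and> (\<forall>j. U' j \<subseteq> P j) \<and> (\<forall>Q\<in>Ts. Q U')"
  proof (rule shrink_tasks[where Inv=Inv])
    show "finite Ts" unfolding Ts_def using finI finJ by auto
    show "\<forall>Q\<in>Ts. \<forall>U. Inv U \<longrightarrow> (\<exists>U'. Inv U' \<and> (\<forall>i. U' i \<subseteq> U i) \<and> Q U')"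
    proof (intro ballI allI impI)
      fix Q V assume "Q \<in> Ts" "Inv V"
      show "\<exists>U'. Inv U' \<and> (\<forall>i. U' i \<subseteq> V i) \<and> Q U'"
      proof (cases "Q \<in> T1 ` I")
        case True
        then obtain i where "i \<in> I" "Q = T1 i" by blast
        then show ?thesis using ach1[OF \<open>i \<in> I\<close> \<open>Inv V\<close>] by simp
      next
        case False
        then obtain x where "x \<in> J" "Q = T2 x" using \<open>Q \<in> Ts\<close> unfolding Ts_def by blast
        moreover obtain i k m where "x = (i,k,m)" by (cases x) blast
        ultimately show ?thesis using ach2[of i k m V] \<open>Inv V\<close> by simp
      qed
    qed
    show "\<forall>Q\<in>Ts. \<forall>U U'. Q U \<and> Inv U' \<and> (\<forall>i. U' i \<subseteq> U i) \<longrightarrow> Q U'"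
    proof (intro ballI allI impI)
      fix Q U U' assume "Q \<in> Ts" and h: "Q U \<and> Inv U' \<and> (\<forall>i. U' i \<subseteq> U i)"
      then show "Q U'"
      proof (cases "Q \<in> T1 ` I")
        case True
        then obtain i where "Q = T1 i" by auto
        then show ?thesis using h closure_mono unfolding T1_def by (metis order_trans)
      next
        case False
        then obtain i k m where "Q = T2 (i,k,m)" using \<open>Q \<in> Ts\<close> unfolding Ts_def by auto
        then have "U i \<inter> U k = {}" "U i \<times> U k \<subseteq> W m" using h unfolding T2_def by auto
        moreover have "U' i \<subseteq> U i" "U' k \<subseteq> U k" using h by blast+
        ultimately have "U' i \<inter> U' k = {}" "U' i \<times> U' k \<subseteq> W m" by blast+
        then show ?thesis using \<open>Q = T2 (i,k,m)\<close> unfolding T2_def by simp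
      qed
    qed
    show "Inv P" by (rule inv0)
  qed
  then obtain U' where U': "Inv U'" "\<forall>Q\<in>Ts. Q U'" by blast
  have "good F W R n U U'"
    unfolding good_def
  proof (rule conjI; intro ballI impI)
    fix i assume "i \<in> Idx (Suc n)"
    then have "i \<in> I" unfolding I_def .
    have "T1 i \<in> Ts" using \<open>i \<in> I\<close> unfolding Ts_def by blast
    with U'(2) have "T1 i U'" by (rule bspec)
    then have "closure (U' i) \<subseteq> P i" unfolding T1_def .
    moreover have "open (U' i) \<and> U' i \<inter> F \<noteq> {}" using U'(1) \<open>i \<in> I\<close> unfolding Inv_def by blast
    ultimately show "open (U' i) \<and> U' i \<inter> F \<noteq> {} \<and> closure (U' i) \<subseteq> par R n U i"
      unfolding P_def by blast
  next
    fix i k assume "i \<in> Idx (Suc n)" "k \<in> Idx (Suc n)" "i \<noteq> k"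
    then have "\<forall>m\<le>n. (i,k,m) \<in> J" unfolding J_def I_def by auto
    then have "\<forall>m\<le>n. T2 (i,k,m) \<in> Ts" unfolding Ts_def by blast
    then have T2: "T2 (i,k,m) U'" if "m \<le> n" for m using U'(2) that by (meson bspec)
    have "U' i \<inter> U' k = {}" using T2[of 0] unfolding T2_def by simp
    moreover have "U' i \<times> U' k \<subseteq> W m" if "m \<le> n" for m using T2[OF that] unfolding T2_def by simp
    ultimately show "U' i \<inter> U' k = {} \<and> (\<forall>m\<le>n. U' i \<times> U' k \<subseteq> W m)"
      by blast
  qed
  then show ?thesis by blast
qed


primrec stg :: "'a::metric_space set \<Rightarrow> (nat \<Rightarrow> ('a\<times>'a) set) \<Rightarrow> (nat \<Rightarrow> 'a set) \<Rightarrow> nat \<Rightarrow> nat \<times> bool list \<Rightarrow> 'a set" where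
  "stg F W R 0 = (\<lambda>_. UNIV)"
| "stg F W R (Suc n) = (SOME U'. good F W R n (stg F W R n) U')"

lemma stg_good:
  fixes F :: "'a::metric_space set"
  assumes perf: "\<forall>x\<in>F. x islimpt F"
    and dense: "\<forall>m A B. open A \<longrightarrow> open B \<longrightarrow> A \<inter> F \<noteq> {} \<longrightarrow> B \<inter> F \<noteq> {} \<longrightarrow> (\<exists>a\<in>A\<inter>F. \<exists>b\<in>B\<inter>F. (a,b) \<in> W m)"
    and Wo: "\<forall>m. open (W m)"
    and R: "\<forall>n. open (R n) \<and> R n \<inter> F \<noteq> {}"
  shows "(\<forall>i\<in>Idx n. open (stg F W R n i) \<and> stg F W R n i \<inter> F \<noteq> {}) \<and> good F W R n (stg F W R n) (stg F W R (Suc n))"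
proof -
  have ex: "good F W R m (stg F W R m) (stg F W R (Suc m))"
    if "\<forall>i\<in>Idx m. open (stg F W R m i) \<and> stg F W R m i \<inter> F \<noteq> {}" for m
  proof -
    have "\<exists>U'. good F W R m (stg F W R m) U'" using step_exists[OF perf dense Wo R that] .
    then show ?thesis by (simp add: someI_ex)
  qed
  have "\<forall>i\<in>Idx n. open (stg F W R n i) \<and> stg F W R n i \<inter> F \<noteq> {}"
  proof (induction n)
    case 0
    then show ?case by (simp add: Idx_def)
  next
    case (Suc n)
    then show ?case using ex[OF Suc] unfolding good_def by blast
  qed
  then show ?thesis using ex by blast
qed

lemma nest_nonempty:
  fixes S :: "nat \<Rightarrow> 'a::topological_space set"
  assumes K: "compact K" and cl: "\<And>n. closed (S n)" and ne: "\<And>n. S n \<noteq> {}"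
    and sub: "\<And>n. S n \<subseteq> K" and dec: "\<And>n. S (Suc n) \<subseteq> S n"
  shows "\<exists>x. \<forall>n. x \<in> S n"
proof -
  have "K \<inter> (\<Inter>i\<in>UNIV. S i) \<noteq> {}"
  proof (rule compact_imp_fip_image[OF K])
    show "\<And>i. i \<in> UNIV \<Longrightarrow> closed (S i)" using cl by blast
    fix I' :: "nat set" assume fin: "finite I'" and "I' \<subseteq> UNIV"
    show "K \<inter> (\<Inter>i\<in>I'. S i) \<noteq> {}"
    proof (cases "I' = {}")
      case True
      then show ?thesis using ne[of 0] sub[of 0] by auto
    next
      case False
      have "S (Max I') \<subseteq> S i" if "i \<in> I'" for i
        using lift_Suc_antimono_le[of S, OF dec] Max_ge[OF fin that] by blast
      then have "S (Max I') \<subseteq> K \<inter> (\<Inter>i\<in>I'. S i)" using sub by blast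
      then show ?thesis using ne by blast
    qed
  qed
  then show ?thesis by blast
qed

lemma uncountable_bool_seq: "uncountable (UNIV :: (nat \<Rightarrow> bool) set)"
proof
  assume "countable (UNIV :: (nat \<Rightarrow> bool) set)"
  then obtain f :: "nat \<Rightarrow> (nat \<Rightarrow> bool)" where "range f = UNIV"
    by (metis UNIV_not_empty uncountable_def)
  then obtain n where "f n = (\<lambda>k. \<not> f k k)" by (metis UNIV_I imageE)
  then have "f n n = (\<not> f n n)" by metis
  then show False by simp
qed

lemma mycielski:
  fixes F :: "'a::metric_space set" and W :: "nat \<Rightarrow> ('a \<times> 'a) set" and Bk :: "nat \<Rightarrow> 'a set"
  assumes cF: "compact F" and neF: "F \<noteq> {}"
    and perf: "\<forall>x\<in>F. x islimpt F"
    and dense: "\<forall>m A B. open A \<longrightarrow> open B \<longrightarrow> A \<inter> F \<noteq> {} \<longrightarrow> B \<inter> F \<noteq> {} \<longrightarrow> (\<exists>a\<in>A\<inter>F. \<exists>b\<in>B\<inter>F. (a,b) \<in> W m)"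
    and Wo: "\<forall>m. open (W m)"
    and Bko: "\<forall>n. open (Bk n)"
    and Bkb: "\<forall>x\<in>F. \<forall>S. open S \<longrightarrow> x \<in> S \<longrightarrow> (\<exists>n. x \<in> Bk n \<and> Bk n \<subseteq> S)"
  shows "\<exists>B. B \<subseteq> F \<and> uncountable B \<and> F \<subseteq> closure B \<and>
           (\<forall>x\<in>B. \<forall>x'\<in>B. x \<noteq> x' \<longrightarrow> (\<forall>m. (x,x') \<in> W m))"
proof -
  define R where "R n = (if Bk n \<inter> F \<noteq> {} then Bk n else UNIV)" for n
  have Rok: "\<forall>n. open (R n) \<and> R n \<inter> F \<noteq> {}" using Bko neF unfolding R_def by auto
  define U where "U = stg F W R"
  have G: "good F W R n (U n) (U (Suc n))" for n
    using stg_good[OF perf dense Wo Rok] unfolding U_def by blast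
  have O: "open (U n i) \<and> U n i \<inter> F \<noteq> {}" if "i \<in> Idx n" for n i
    using stg_good[OF perf dense Wo Rok] that unfolding U_def by blast
  define pref where "pref \<sigma> n = map \<sigma> [0..<n]" for \<sigma> :: "nat \<Rightarrow> bool" and n
  have idx: "(j, pref \<sigma> n) \<in> Idx n" if "j < n" for j \<sigma> n
    using that unfolding Idx_def pref_def by simp
  have cl_sub: "closure (U (Suc n) (j, pref \<sigma> (Suc n))) \<subseteq> (if j < n then U n (j, pref \<sigma> n) else R n)"
    if "j < Suc n" for j n \<sigma>
  proof -
    have bl: "butlast (pref \<sigma> (Suc n)) = pref \<sigma> n" unfolding pref_def by simp
    have "closure (U (Suc n) (j, pref \<sigma> (Suc n))) \<subseteq> par R n (U n) (j, pref \<sigma> (Suc n))"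
      using G[of n] idx[OF that] unfolding good_def by blast
    then show ?thesis unfolding par_def fst_conv snd_conv bl .
  qed
  define S where "S j \<sigma> k = closure (U (Suc j + k) (j, pref \<sigma> (Suc j + k))) \<inter> F" for j \<sigma> k
  have exS: "\<exists>x. \<forall>k. x \<in> S j \<sigma> k" for j \<sigma>
  proof (rule nest_nonempty[OF cF])
    show "closed (S j \<sigma> k)" for k unfolding S_def using compact_imp_closed[OF cF] by blast
    show "S j \<sigma> k \<noteq> {}" for k
    proof -
      have "j < Suc j + k" by simp
      then have "U (Suc j + k) (j, pref \<sigma> (Suc j + k)) \<inter> F \<noteq> {}" using O idx by blast
      then show ?thesis unfolding S_def using closure_subset by blast
    qed
    show "S j \<sigma> k \<subseteq> F" for k unfolding S_def by blast
    show "S j \<sigma> (Suc k) \<subseteq> S j \<sigma> k" for k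
    proof -
      have "closure (U (Suc (Suc j + k)) (j, pref \<sigma> (Suc (Suc j + k)))) \<subseteq> U (Suc j + k) (j, pref \<sigma> (Suc j + k))"
        using cl_sub[where j=j and n="Suc j + k"] by simp
      moreover have "Suc j + Suc k = Suc (Suc j + k)" by simp
      ultimately show ?thesis unfolding S_def using closure_subset by (metis Int_mono order_refl order_trans)
    qed
  qed
  define p where "p j \<sigma> = (SOME x. \<forall>k. x \<in> S j \<sigma> k)" for j \<sigma>
  have pS: "\<forall>k. p j \<sigma> \<in> S j \<sigma> k" for j \<sigma> unfolding p_def using exS by (rule someI_ex)
  have pF: "p j \<sigma> \<in> F" for j \<sigma> using pS[of j \<sigma>] unfolding S_def by blast
  have pU: "p j \<sigma> \<in> U n (j, pref \<sigma> n)" if "j < n" for j \<sigma> n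
  proof -
    have eq: "Suc j + Suc (n - Suc j) = Suc n" using that by simp
    have "p j \<sigma> \<in> S j \<sigma> (Suc (n - Suc j))" using pS by blast
    then have "p j \<sigma> \<in> closure (U (Suc n) (j, pref \<sigma> (Suc n)))"
      unfolding S_def eq by blast
    moreover have "closure (U (Suc n) (j, pref \<sigma> (Suc n))) \<subseteq> U n (j, pref \<sigma> n)"
      using cl_sub[where j=j and n=n] that by simp
    ultimately show ?thesis by blast
  qed
  have pR: "p j \<sigma> \<in> R j" for j \<sigma>
  proof -
    have "p j \<sigma> \<in> closure (U (Suc j) (j, pref \<sigma> (Suc j)))"
    proof -
      have "p j \<sigma> \<in> S j \<sigma> 0" using pS by blast
      then show ?thesis unfolding S_def by simp
    qed
    moreover have "closure (U (Suc j) (j, pref \<sigma> (Suc j))) \<subseteq> R j" using cl_sub[where j=j and n=j] by simp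
    ultimately show ?thesis by blast
  qed
  have sep: "U n i \<inter> U n k = {} \<and> U n i \<times> U n k \<subseteq> W m"
    if "i \<in> Idx n" "k \<in> Idx n" "i \<noteq> k" "m < n" for n i k m
  proof -
    obtain n' where n': "n = Suc n'" using \<open>m < n\<close> by (cases n) auto
    show ?thesis using G[of n'] that unfolding good_def n' by auto
  qed
  define B where "B = (\<lambda>(j,\<sigma>). p j \<sigma>) ` UNIV"
  have BF: "B \<subseteq> F" unfolding B_def using pF by auto
  have dens: "F \<subseteq> closure B"
  proof
    fix x assume "x \<in> F"
    show "x \<in> closure B"
      unfolding closure_approachable
    proof (intro allI impI)
      fix e :: real assume "e > 0"
      have "x \<in> ball x e" using \<open>e > 0\<close> by simp
      then obtain n where n: "x \<in> Bk n" "Bk n \<subseteq> ball x e"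
        using Bkb \<open>x \<in> F\<close> open_ball by blast
      then have "R n = Bk n" unfolding R_def using \<open>x \<in> F\<close> by auto
      then have "p n (\<lambda>_. True) \<in> ball x e" using pR n by blast
      moreover have "p n (\<lambda>_. True) \<in> B" unfolding B_def by auto
      ultimately show "\<exists>y\<in>B. dist y x < e" by (metis dist_commute mem_ball)
    qed
  qed
  have pref_nth: "pref \<sigma> n ! d = \<sigma> d" if "d < n" for \<sigma> n d
    using that unfolding pref_def by simp
  have inj: "inj (p 0)"
  proof
    fix \<sigma> \<sigma>' assume eq: "p 0 \<sigma> = p 0 \<sigma>'"
    show "\<sigma> = \<sigma>'"
    proof (rule ccontr)
      assume "\<sigma> \<noteq> \<sigma>'"
      then obtain d where d: "\<sigma> d \<noteq> \<sigma>' d" by blast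
      have "pref \<sigma> (Suc d) \<noteq> pref \<sigma>' (Suc d)" using d pref_nth[where \<sigma>=\<sigma> and n="Suc d" and d=d] pref_nth[where \<sigma>=\<sigma>' and n="Suc d" and d=d] by force
      moreover have i1: "(0, pref \<sigma> (Suc d)) \<in> Idx (Suc d)" "(0, pref \<sigma>' (Suc d)) \<in> Idx (Suc d)"
        using idx by auto
      ultimately have "U (Suc d) (0, pref \<sigma> (Suc d)) \<inter> U (Suc d) (0, pref \<sigma>' (Suc d)) = {}"
        using sep[OF i1] by blast
      moreover have "p 0 \<sigma> \<in> U (Suc d) (0, pref \<sigma> (Suc d))" "p 0 \<sigma>' \<in> U (Suc d) (0, pref \<sigma>' (Suc d))"
        using pU by auto
      ultimately show False using eq by auto
    qed
  qed
  have unc: "uncountable B"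
  proof
    assume "countable B"
    moreover have "range (p 0) \<subseteq> B" unfolding B_def by auto
    ultimately have "countable (range (p 0))" using countable_subset by blast
    then have "countable (UNIV :: (nat \<Rightarrow> bool) set)" using countable_image_inj_on inj by blast
    then show False using uncountable_bool_seq by blast
  qed
  have scr: "\<forall>m. (x,x') \<in> W m" if "x \<in> B" "x' \<in> B" "x \<noteq> x'" for x x'
  proof
    fix m
    obtain j \<sigma> where x: "x = p j \<sigma>" using \<open>x \<in> B\<close> unfolding B_def by auto
    obtain j' \<sigma>' where x': "x' = p j' \<sigma>'" using \<open>x' \<in> B\<close> unfolding B_def by auto
    obtain N where N: "\<forall>n\<ge>N. (j, pref \<sigma> n) \<noteq> (j', pref \<sigma>' n)"
    proof (cases "j = j'")
      case True
      then have "\<sigma> \<noteq> \<sigma>'" using \<open>x \<noteq> x'\<close> x x' by auto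
      then obtain d where d: "\<sigma> d \<noteq> \<sigma>' d" by blast
      have "(j, pref \<sigma> n) \<noteq> (j', pref \<sigma>' n)" if "Suc d \<le> n" for n
      proof -
        have "d < n" using that by simp
        then have "pref \<sigma> n ! d \<noteq> pref \<sigma>' n ! d" using d pref_nth by simp
        then show ?thesis by auto
      qed
      then show ?thesis using that by blast
    next
      case False
      then show ?thesis using that by blast
    qed
    define n where "n = max (max N (Suc m)) (Suc (max j j'))"
    have n: "N \<le> n" "m < n" "j < n" "j' < n" unfolding n_def by auto
    have ne: "(j, pref \<sigma> n) \<noteq> (j', pref \<sigma>' n)" using N n(1) by blast
    have "U n (j, pref \<sigma> n) \<times> U n (j', pref \<sigma>' n) \<subseteq> W m"
      using sep[OF idx[OF n(3)] idx[OF n(4)] ne n(2)] by (rule conjunct2)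
    moreover have "x \<in> U n (j, pref \<sigma> n)" using pU[OF n(3)] x by simp
    moreover have "x' \<in> U n (j', pref \<sigma>' n)" using pU[OF n(4)] x' by simp
    ultimately show "(x,x') \<in> W m" by blast
  qed
  show ?thesis
    apply (rule exI[of _ B])
    using BF unc dens scr by blast
qed



lemma openv: "continuous_on UNIV f \<Longrightarrow> open S \<Longrightarrow> open (f -` S)"
  using continuous_on_open_vimage[of UNIV f] by auto

lemma closedv: "continuous_on UNIV f \<Longrightarrow> closed S \<Longrightarrow> closed (f -` S)"
  unfolding closed_def vimage_Compl[symmetric] using openv by blast

lemma compact_countable_base:
  assumes "compact (UNIV :: 'a::metric_space set)"
  shows "\<exists>\<B>::'a set set. countable \<B> \<and> (\<forall>B\<in>\<B>. open B) \<and>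
           (\<forall>S x. open S \<longrightarrow> x \<in> S \<longrightarrow> (\<exists>B\<in>\<B>. x \<in> B \<and> B \<subseteq> S))"
proof -
  have Cex: "\<exists>C::'a set. finite C \<and> UNIV \<subseteq> (\<Union>c\<in>C. ball c (1 / Suc n))" for n
  proof -
    have cov: "UNIV \<subseteq> (\<Union>c\<in>UNIV. ball (c::'a) (1 / Suc n))"
    proof
      fix x :: 'a
      have "x \<in> ball x (1 / Suc n)" by simp
      then show "x \<in> (\<Union>c\<in>UNIV. ball c (1 / Suc n))" by blast
    qed
    show ?thesis
    proof (rule compactE_image[OF assms _ cov])
      show "open (ball T (1 / Suc n))" for T :: 'a by (rule open_ball)
      show "\<exists>C::'a set. finite C \<and> UNIV \<subseteq> (\<Union>c\<in>C. ball c (1 / Suc n))"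
        if "C' \<subseteq> UNIV" "finite C'" "UNIV \<subseteq> (\<Union>c\<in>C'. ball c (1 / Suc n))" for C' :: "'a set"
        by (rule exI[of _ C'], intro conjI that(2) that(3))
    qed
  qed
  define C where "C n = (SOME C::'a set. finite C \<and> UNIV \<subseteq> (\<Union>c\<in>C. ball c (1 / Suc n)))" for n
  have C0: "finite (C n) \<and> UNIV \<subseteq> (\<Union>c\<in>C n. ball c (1 / Suc n))" for n
    unfolding C_def by (rule someI_ex[OF Cex])
  have C: "finite (C n)" "UNIV \<subseteq> (\<Union>c\<in>C n. ball c (1 / Suc n))" for n using C0[of n] by (rule conjunct1, rule conjunct2)
  define \<B> where "\<B> = (\<Union>n. (\<lambda>c. ball c (1 / Suc n)) ` C n)"
  have b1: "countable \<B>" unfolding \<B>_def using C(1) by (intro countable_UN) (auto intro: countable_finite)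
  have b2: "\<forall>B\<in>\<B>. open B" unfolding \<B>_def by auto
  have b3: "\<exists>B\<in>\<B>. x \<in> B \<and> B \<subseteq> S" if "open S" "x \<in> S" for S x
  proof -
    have "\<exists>r>0. ball x r \<subseteq> S" using that unfolding open_contains_ball by blast
    then obtain r where r: "r > 0" "ball x r \<subseteq> S" by blast
    obtain n :: nat where n: "2 / r < real n" using reals_Archimedean2[of "2 / r"] by (elim exE)
    have "2 / r < real (Suc n)" using n by simp
    then have "2 < real (Suc n) * r" using r by (simp add: divide_less_eq)
    then have lt: "2 / real (Suc n) < r" by (simp add: divide_less_eq mult.commute)
    have "x \<in> (\<Union>c\<in>C n. ball c (1 / Suc n))" using C(2)[of n] by (rule subsetD) simp
    then obtain c where c: "c \<in> C n" "x \<in> ball c (1 / Suc n)" by (rule UN_E)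
    have sub: "ball c (1 / Suc n) \<subseteq> ball x r"
    proof
      fix y assume "y \<in> ball c (1 / Suc n)"
      then have "dist c y < 1 / Suc n" by simp
      moreover have "dist x c < 1 / Suc n" using c(2) by (simp add: dist_commute)
      ultimately have "dist x y < 1 / Suc n + 1 / Suc n" using dist_triangle[of x y c] by linarith
      then have "dist x y < 2 / Suc n" by simp
      then show "y \<in> ball x r" using lt by simp
    qed
    have "ball c (1 / Suc n) \<in> (\<lambda>c. ball c (1 / Suc n)) ` C n" using c(1) by (rule imageI)
    then have "ball c (1 / Suc n) \<in> \<B>" unfolding \<B>_def by (rule UN_I[OF UNIV_I])
    then show ?thesis using sub c r by (intro bexI[of _ "ball c (1 / Suc n)"]) auto
  qed
  have "\<forall>S x. open S \<longrightarrow> x \<in> S \<longrightarrow> (\<exists>B\<in>\<B>. x \<in> B \<and> B \<subseteq> S)" using b3 by blast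
  then show ?thesis using b1 b2 by (intro exI[of _ \<B>] conjI)
qed

lemma finite_union_closed_interior:
  assumes "finite D" "\<forall>c\<in>D. closed (G c) \<and> interior (G c) = {}"
  shows "interior (\<Union>c\<in>D. G c) = {}"
  using assms
proof (induction D)
  case empty
  then show ?case by simp
next
  case (insert c D)
  then have "interior (\<Union>c\<in>D. G c) = {}" by blast
  then have "interior (G c \<union> (\<Union>c\<in>D. G c)) = interior (G c)"
    using interior_closed_Un_empty_interior insert.prems by blast
  then show ?case using insert.prems by simp
qed



lemma cont_slice:
  assumes "continuous_on UNIV (\<lambda>(t, x). act t x)"
  shows "continuous_on UNIV (act t)"
proof -
  have "continuous_on UNIV (\<lambda>x. (\<lambda>(t, x). act t x) (t, x))"
    by (rule continuous_on_compose2[OF assms]) (auto intro!: continuous_intros)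
  then show ?thesis by simp
qed

lemma semi_open:
  fixes actZ :: "'g::topological_group_add \<Rightarrow> 'z::metric_space \<Rightarrow> 'z"
    and actY :: "'g \<Rightarrow> 'y::metric_space \<Rightarrow> 'y"
    and f :: "'z \<Rightarrow> 'y"
  assumes cZ: "compact Z"
    and contZ: "continuous_on UNIV (\<lambda>(t, x). actZ t x)"
    and Zinv: "\<And>t z. z \<in> Z \<Longrightarrow> actZ t z \<in> Z"
    and Z0: "\<And>z. actZ 0 z = z"
    and Zadd: "\<And>s t z. actZ (s + t) z = actZ s (actZ t z)"
    and flY: "flow actY"
    and minY: "minimal_flow actY"
    and contf: "continuous_on UNIV f"
    and equi: "\<And>t z. f (actZ t z) = actY t (f z)"
    and ap: "Z \<subseteq> closure {z \<in> Z. almost_periodic_pt actZ z}"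
    and E: "open E" "Z \<inter> E \<noteq> {}"
  shows "interior (f ` (Z \<inter> E)) \<noteq> {}"
proof -
  have Y0: "\<And>y. actY 0 y = y" and Yadd: "\<And>s t y. actY (s + t) y = actY s (actY t y)"
    and contY: "continuous_on UNIV (\<lambda>(t, x). actY t x)"
    using flY unfolding flow_def by auto
  have contYt: "continuous_on UNIV (actY t)" for t using cont_slice[OF contY] .
  obtain e where e: "e \<in> Z" "e \<in> E" using E by blast
  have "E \<inter> closure {z \<in> Z. almost_periodic_pt actZ z} \<noteq> {}" using e ap by blast
  then have "E \<inter> {z \<in> Z. almost_periodic_pt actZ z} \<noteq> {}" using open_Int_closure_eq_empty[OF E(1)] by blast
  then obtain z where z: "z \<in> E" "z \<in> Z" "almost_periodic_pt actZ z" by blast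
  have "\<exists>r>0. cball z r \<subseteq> E" using E(1) z(1) unfolding open_contains_cball by blast
  then obtain r where r: "r > 0" "cball z r \<subseteq> E" by blast
  define U1 where "U1 = ball z r"
  have U1c: "U1 \<subseteq> cball z r" unfolding U1_def by auto
  define Q where "Q = (\<lambda>(t, x). actZ t x) -` U1"
  have "open Q" unfolding Q_def U1_def by (rule openv[OF contZ open_ball])
  moreover have "(0, z) \<in> Q" unfolding Q_def U1_def using Z0 r by simp
  ultimately obtain V U2 where VU: "open V" "open U2" "(0, z) \<in> V \<times> U2" "V \<times> U2 \<subseteq> Q"
    by (rule open_prod_elim)
  have "syndetic {t. actZ t z \<in> U2}" using z(3) VU unfolding almost_periodic_pt_def by blast
  then obtain K where K: "compact K" "\<And>t. \<exists>k\<in>K. \<exists>s\<in>{t. actZ t z \<in> U2}. t = k + s"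
    unfolding syndetic_def by blast
  define P where "P c = (\<lambda>k. -c + k) -` V" for c :: 'g
  have Popen: "open (P c)" for c
    unfolding P_def by (rule openv[OF _ VU(1)]) (intro continuous_intros)
  have covK: "K \<subseteq> (\<Union>c\<in>K. P c)"
  proof
    fix k assume "k \<in> K"
    moreover have "k \<in> P k" unfolding P_def using VU(3) by simp
    ultimately show "k \<in> (\<Union>c\<in>K. P c)" by blast
  qed
  have "\<exists>D. D \<subseteq> K \<and> finite D \<and> K \<subseteq> (\<Union>c\<in>D. P c)"
  proof (rule compactE_image[OF K(1) _ covK])
    show "open (P T)" for T by (rule Popen)
    show "\<exists>D. D \<subseteq> K \<and> finite D \<and> K \<subseteq> (\<Union>c\<in>D. P c)"
      if "C' \<subseteq> K" "finite C'" "K \<subseteq> (\<Union>c\<in>C'. P c)" for C'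
      by (rule exI[of _ C'], intro conjI that)
  qed
  then obtain D where D: "D \<subseteq> K" "finite D" "K \<subseteq> (\<Union>c\<in>D. P c)" by blast
  define C where "C = cball z r \<inter> Z"
  have cC: "compact C" unfolding C_def using cZ by (intro closed_Int_compact) auto
  have CE: "C \<subseteq> Z \<inter> E" unfolding C_def using r by blast
  define M where "M = (\<Union>c\<in>D. actY c ` (f ` C))"
  have cpt: "compact (actY c ` (f ` C))" for c
    by (intro compact_continuous_image continuous_on_subset[OF contYt] continuous_on_subset[OF contf] cC) auto
  have Mclosed: "closed M" unfolding M_def using D(2) cpt by (intro closed_UN) (auto intro: compact_imp_closed)
  have orbM: "actY t (f z) \<in> M" for t
  proof -
    obtain k s where ks: "k \<in> K" "actZ s z \<in> U2" "t = k + s" using K(2)[of t] by blast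
    obtain c where c: "c \<in> D" "k \<in> P c" using D(3) ks(1) by blast
    define v where "v = -c + k"
    have v: "v \<in> V" using c(2) unfolding P_def v_def by simp
    have kcv: "k = c + v" unfolding v_def by (simp add: add.assoc[symmetric])
    define w where "w = actZ s z"
    have wZ: "w \<in> Z" unfolding w_def using Zinv z(2) .
    have "(v, w) \<in> Q" using VU(4) v ks(2) unfolding w_def by blast
    then have "actZ v w \<in> U1" unfolding Q_def by simp
    moreover have "actZ v w \<in> Z" using Zinv wZ .
    ultimately have vwC: "actZ v w \<in> C" unfolding C_def using U1c by blast
    have "actZ t z = actZ c (actZ v w)" unfolding w_def ks(3) kcv by (simp add: Zadd add.assoc)
    then have "actY t (f z) = actY c (f (actZ v w))" using equi by metis
    then show ?thesis unfolding M_def using c(1) vwC by blast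
  qed
  define Orb where "Orb = closure (range (\<lambda>t. actY t (f z)))"
  have OrbM: "Orb \<subseteq> M" unfolding Orb_def using orbM Mclosed by (intro closure_minimal) auto
  have "actY t ` Orb \<subseteq> Orb" for t
    unfolding Orb_def
  proof (rule image_closure_subset)
    show "continuous_on (closure (range (\<lambda>t. actY t (f z)))) (actY t)"
      using continuous_on_subset[OF contYt] by blast
    show "closed (closure (range (\<lambda>t. actY t (f z))))" by simp
    show "actY t ` range (\<lambda>t. actY t (f z)) \<subseteq> closure (range (\<lambda>t. actY t (f z)))"
    proof
      fix y assume "y \<in> actY t ` range (\<lambda>t. actY t (f z))"
      then obtain s where "y = actY t (actY s (f z))" by (elim imageE rangeE) simp
      then have "y = actY (t + s) (f z)" by (simp only: Yadd)
      then have "y \<in> range (\<lambda>t. actY t (f z))" by (rule range_eqI)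
      then show "y \<in> closure (range (\<lambda>t. actY t (f z)))" by (rule subsetD[OF closure_subset])
    qed
  qed
  moreover have "closed Orb" "Orb \<noteq> {}" unfolding Orb_def using closure_subset by auto
  ultimately have "Orb = UNIV" using minY unfolding minimal_flow_def by blast
  then have MU: "M = UNIV" using OrbM by blast
  have "\<exists>c\<in>D. interior (actY c ` (f ` C)) \<noteq> {}"
  proof (rule ccontr)
    assume "\<not> (\<exists>c\<in>D. interior (actY c ` (f ` C)) \<noteq> {})"
    then have h: "interior (actY c ` (f ` C)) = {}" if "c \<in> D" for c using that by blast
    have "\<forall>c\<in>D. closed (actY c ` (f ` C)) \<and> interior (actY c ` (f ` C)) = {}"
    proof
      fix c assume "c \<in> D"
      show "closed (actY c ` (f ` C)) \<and> interior (actY c ` (f ` C)) = {}"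
        using compact_imp_closed[OF cpt[of c]] h[OF \<open>c \<in> D\<close>] by (rule conjI)
    qed
    then have "interior M = {}" unfolding M_def by (rule finite_union_closed_interior[OF D(2)])
    then show False using MU by simp
  qed
  then obtain c where c: "interior (actY c ` (f ` C)) \<noteq> {}" by (elim bexE)
  define O' where "O' = interior (actY c ` (f ` C))"
  define P' where "P' = actY c -` O'"
  have "open P'" unfolding P'_def O'_def by (rule openv[OF contYt open_interior])
  moreover have "P' \<noteq> {}"
  proof -
    obtain y where y: "y \<in> O'" using c unfolding O'_def by blast
    have "actY c (actY (-c) y) = y" using Yadd[of c "-c" y] Y0 by simp
    then have "actY (-c) y \<in> P'" unfolding P'_def using y by simp
    then show ?thesis by blast
  qed
  moreover have "P' \<subseteq> f ` C"
  proof
    fix x assume "x \<in> P'"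
    then have "actY c x \<in> actY c ` (f ` C)" unfolding P'_def O'_def using interior_subset by blast
    then obtain w where w: "w \<in> f ` C" "actY c x = actY c w" by blast
    have "actY (-c) (actY c x) = x" using Yadd[of "-c" c x] Y0 by simp
    moreover have "actY (-c) (actY c w) = w" using Yadd[of "-c" c w] Y0 by simp
    ultimately have "x = w" using w(2) by metis
    then show "x \<in> f ` C" using w(1) by simp
  qed
  ultimately have "interior (f ` C) \<noteq> {}" using interior_maximal by blast
  moreover have "interior (f ` C) \<subseteq> interior (f ` (Z \<inter> E))" using CE by (intro interior_mono image_mono)
  ultimately show ?thesis by blast
qed



lemma dense_of:
  assumes "\<And>T. open T \<Longrightarrow> T \<noteq> {} \<Longrightarrow> T \<inter> D \<noteq> {}"
  shows "closure D = UNIV"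
proof (rule ccontr)
  assume "closure D \<noteq> UNIV"
  then obtain y where y: "y \<notin> closure D" by blast
  have "open (- closure D)" by (rule open_Compl[OF closed_closure])
  moreover have "- closure D \<noteq> {}" using y by blast
  ultimately have "- closure D \<inter> D \<noteq> {}" using assms by blast
  then show False using closure_subset by blast
qed

theorem theorem5p5:
  fixes actX :: "'g::topological_group_add \<Rightarrow> 'x::metric_space \<Rightarrow> 'x"
    and actY :: "'g \<Rightarrow> 'y::metric_space \<Rightarrow> 'y"
    and \<pi> :: "'x \<Rightarrow> 'y"
  assumes "compact (UNIV :: 'x set)" and "compact (UNIV :: 'y set)"
    and "flow actX" and "flow actY"
    and "extension actX actY \<pi>"
    and "Rpi \<pi> \<noteq> Id"
    and "minimal_flow actY"
    and "Rpi \<pi> \<subseteq> closure {z \<in> Rpi \<pi>. almost_periodic_pt (diag_act actX) z}"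
    and "weakly_mixing_ext actX \<pi>"
  shows "\<exists>YLY. residual YLY \<and>
    (\<forall>y\<in>YLY. (\<forall>x\<in>\<pi> -` {y}. x islimpt (\<pi> -` {y})) \<and>
       (\<exists>B. B \<subseteq> \<pi> -` {y} \<and> uncountable B \<and> \<pi> -` {y} \<subseteq> closure B \<and>
            LY_scrambled actX \<pi> (Rpi \<pi>) B))"
proof -
  have contX: "continuous_on UNIV (\<lambda>(t, x). actX t x)" and X0: "\<And>x. actX 0 x = x"
    and Xadd: "\<And>s t x. actX (s + t) x = actX s (actX t x)"
    using assms(3) unfolding flow_def by auto
  have contpi: "continuous_on UNIV \<pi>" and surjpi: "surj \<pi>" and equi: "\<And>t x. \<pi> (actX t x) = actY t (\<pi> x)"
    using assms(5) unfolding extension_def by auto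
  define Z where "Z = Rpi \<pi>"
  have Zmem: "(a, b) \<in> Z \<longleftrightarrow> \<pi> a = \<pi> b" for a b unfolding Z_def Rpi_def by simp
  define \<pi>R where "\<pi>R = (\<lambda>p::'x \<times> 'x. \<pi> (fst p))"
  have contfst: "continuous_on UNIV \<pi>R"
    unfolding \<pi>R_def by (rule continuous_on_compose2[OF contpi]) (auto intro!: continuous_intros)
  have contsnd: "continuous_on UNIV (\<lambda>p::'x \<times> 'x. \<pi> (snd p))"
    by (rule continuous_on_compose2[OF contpi]) (auto intro!: continuous_intros)
  have "Z = {p. \<pi>R p = \<pi> (snd p)}" unfolding Z_def Rpi_def \<pi>R_def by auto
  then have Zclosed: "closed Z" using closed_Collect_eq[OF contfst contsnd] by simp
  have "compact (UNIV \<times> UNIV :: ('x \<times> 'x) set)" using compact_Times[OF assms(1) assms(1)] .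
  then have "compact (UNIV :: ('x \<times> 'x) set)" by simp
  then have cZ: "compact Z" using compact_Int_closed[OF _ Zclosed] by (metis inf_top_left)
  have c1: "continuous_on UNIV (\<lambda>q::'g \<times> ('x \<times> 'x). actX (fst q) (fst (snd q)))"
  proof -
    have "continuous_on UNIV (\<lambda>q::'g \<times> ('x \<times> 'x). (\<lambda>(t, x). actX t x) (fst q, fst (snd q)))"
      by (rule continuous_on_compose2[OF contX]) (auto intro!: continuous_intros)
    then show ?thesis by simp
  qed
  have c2: "continuous_on UNIV (\<lambda>q::'g \<times> ('x \<times> 'x). actX (fst q) (snd (snd q)))"
  proof -
    have "continuous_on UNIV (\<lambda>q::'g \<times> ('x \<times> 'x). (\<lambda>(t, x). actX t x) (fst q, snd (snd q)))"
      by (rule continuous_on_compose2[OF contX]) (auto intro!: continuous_intros)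
    then show ?thesis by simp
  qed
  have "(\<lambda>(t, p). diag_act actX t p) = (\<lambda>q::'g \<times> ('x \<times> 'x). (actX (fst q) (fst (snd q)), actX (fst q) (snd (snd q))))"
    unfolding diag_act_def by (auto simp: fun_eq_iff)
  then have contD: "continuous_on UNIV (\<lambda>(t, p). diag_act actX t p)"
    using continuous_on_Pair[OF c1 c2] by simp
  have contDt: "continuous_on UNIV (diag_act actX t)" for t using cont_slice[OF contD] .
  have Zinv: "diag_act actX t z \<in> Z" if "z \<in> Z" for t z
  proof -
    obtain a b where z: "z = (a, b)" by (cases z)
    then have "\<pi> a = \<pi> b" using that Zmem by simp
    then show ?thesis unfolding z diag_act_def using Zmem equi by simp
  qed
  have SO: "interior (\<pi>R ` (Z \<inter> E)) \<noteq> {}" if "open E" "Z \<inter> E \<noteq> {}" for E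
  proof (rule semi_open[where actZ = "diag_act actX" and actY = actY])
    show "compact Z" by (rule cZ)
    show "continuous_on UNIV (\<lambda>(t, p). diag_act actX t p)" by (rule contD)
    show "\<And>t z. z \<in> Z \<Longrightarrow> diag_act actX t z \<in> Z" by (rule Zinv)
    show "\<And>z. diag_act actX 0 z = z" unfolding diag_act_def by (simp add: X0)
    show "\<And>s t z. diag_act actX (s + t) z = diag_act actX s (diag_act actX t z)"
      unfolding diag_act_def by (simp add: Xadd)
    show "flow actY" by (rule assms(4))
    show "minimal_flow actY" by (rule assms(7))
    show "continuous_on UNIV \<pi>R" by (rule contfst)
    show "\<And>t z. \<pi>R (diag_act actX t z) = actY t (\<pi>R z)" unfolding \<pi>R_def diag_act_def by (simp add: equi)
    show "Z \<subseteq> closure {z \<in> Z. almost_periodic_pt (diag_act actX) z}" unfolding Z_def by (rule assms(8))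
    show "open E" "Z \<inter> E \<noteq> {}" by (rule that)+
  qed
  define WO where "WO Ob = {p. \<exists>t. diag_act actX t p \<in> Ob}" for Ob
  have WOopen: "open (WO Ob)" if "open Ob" for Ob
  proof -
    have "WO Ob = (\<Union>t. diag_act actX t -` Ob)" unfolding WO_def by blast
    moreover have "open (diag_act actX t -` Ob)" for t by (rule openv[OF contDt that])
    ultimately show ?thesis by (simp only:) (rule open_UN, blast)
  qed
  have WMdense: "Z \<inter> E \<inter> WO Ob \<noteq> {}" if "open Ob" "Z \<inter> Ob \<noteq> {}" "open E" "Z \<inter> E \<noteq> {}" for Ob E
  proof -
    have o1: "openin (top_of_set Z) (Z \<inter> E)" using that(3) by (rule openin_open_Int)
    have o2: "openin (top_of_set Z) (Z \<inter> Ob)" using that(1) by (rule openin_open_Int)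
    have wm: "\<forall>U V. openin (top_of_set Z) U \<and> U \<noteq> {} \<and> openin (top_of_set Z) V \<and> V \<noteq> {}
        \<longrightarrow> (\<exists>t. V \<inter> diag_act actX t ` U \<noteq> {})"
      using assms(9) unfolding weakly_mixing_ext_def Z_def .
    have "\<exists>t. (Z \<inter> Ob) \<inter> diag_act actX t ` (Z \<inter> E) \<noteq> {}"
      using wm[rule_format, OF conjI[OF o1 conjI[OF that(4) conjI[OF o2 that(2)]]]] .
    then obtain t where "(Z \<inter> Ob) \<inter> diag_act actX t ` (Z \<inter> E) \<noteq> {}" by (elim exE)
    then obtain p where p: "p \<in> Z \<inter> E" "diag_act actX t p \<in> Ob" by blast
    then have "p \<in> WO Ob" unfolding WO_def by blast
    then show ?thesis using p by blast
  qed
  obtain \<B> :: "'x set set" where b1: "countable \<B>" and b2: "\<forall>B\<in>\<B>. open B"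
    and b3: "\<forall>S x. open S \<longrightarrow> x \<in> S \<longrightarrow> (\<exists>B\<in>\<B>. x \<in> B \<and> B \<subseteq> S)"
    using compact_countable_base[OF assms(1)] by blast
  have base: "\<exists>B\<in>\<B>. x \<in> B \<and> B \<subseteq> S" if "open S" "x \<in> S" for S x using b3 that by blast
  define \<O> where "\<O> = {Ob. \<exists>O1 O2. Ob = O1 \<times> O2 \<and> O1 \<in> \<B> \<and> O2 \<in> \<B> \<and> Z \<inter> (O1 \<times> O2) \<noteq> {}}"
  have Ocount: "countable \<O>"
  proof -
    have "\<O> \<subseteq> (\<lambda>(a, b). a \<times> b) ` (\<B> \<times> \<B>)"
    proof
      fix Ob assume "Ob \<in> \<O>"
      then obtain O1 O2 where "Ob = O1 \<times> O2" "O1 \<in> \<B>" "O2 \<in> \<B>" unfolding \<O>_def by blast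
      then show "Ob \<in> (\<lambda>(a, b). a \<times> b) ` (\<B> \<times> \<B>)" by (intro image_eqI[of _ _ "(O1, O2)"]) auto
    qed
    moreover have "countable ((\<lambda>(a, b). a \<times> b) ` (\<B> \<times> \<B>))" using b1 by auto
    ultimately show ?thesis using countable_subset by blast
  qed
  have Oprop: "open Ob \<and> Z \<inter> Ob \<noteq> {}" if "Ob \<in> \<O>" for Ob
    using that b2 unfolding \<O>_def by (auto intro: open_Times)
  define Dfun where "Dfun A B Ob = interior (\<pi>R ` (Z \<inter> (A \<times> B) \<inter> WO Ob)) \<union> - closure (\<pi>R ` (Z \<inter> (A \<times> B)))" for A B Ob
  define \<D> where "\<D> = (\<lambda>(A, B, Ob). Dfun A B Ob) ` (\<B> \<times> \<B> \<times> \<O>)"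
  have Dcount: "countable \<D>" unfolding \<D>_def using b1 Ocount by auto
  have Dprop: "open (Dfun A B Ob) \<and> closure (Dfun A B Ob) = UNIV" if "A \<in> \<B>" "B \<in> \<B>" "Ob \<in> \<O>" for A B Ob
  proof
    show "open (Dfun A B Ob)" unfolding Dfun_def by (intro open_Un open_interior open_Compl closed_closure)
    show "closure (Dfun A B Ob) = UNIV"
    proof (rule dense_of)
      fix T :: "'y set" assume T: "open T" "T \<noteq> {}"
      define X where "X = \<pi>R ` (Z \<inter> (A \<times> B))"
      show "T \<inter> Dfun A B Ob \<noteq> {}"
      proof (cases "T \<subseteq> closure X")
        case True
        then have "T \<inter> closure X \<noteq> {}" using T by blast
        then have "T \<inter> X \<noteq> {}" using open_Int_closure_eq_empty[OF T(1)] by blast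
        then obtain p where p: "p \<in> Z \<inter> (A \<times> B)" "\<pi>R p \<in> T" unfolding X_def by blast
        define E where "E = (A \<times> B) \<inter> \<pi>R -` T"
        have oA: "open A" "open B" using b2 that(1,2) by blast+
        have oE: "open E" unfolding E_def
          by (rule open_Int[OF open_Times[OF oA] openv[OF contfst T(1)]])
        have ZE: "Z \<inter> E \<noteq> {}" using p unfolding E_def by blast
        have Ob: "open Ob" "Z \<inter> Ob \<noteq> {}" using Oprop[OF that(3)] by blast+
        have "Z \<inter> E \<inter> WO Ob \<noteq> {}" by (rule WMdense[OF Ob oE ZE])
        then have ZEW: "Z \<inter> (E \<inter> WO Ob) \<noteq> {}" by (simp add: Int_assoc)
        have ne: "interior (\<pi>R ` (Z \<inter> (E \<inter> WO Ob))) \<noteq> {}"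
          using SO[OF open_Int[OF oE WOopen[OF Ob(1)]] ZEW] .
        have "\<pi>R ` (Z \<inter> (E \<inter> WO Ob)) \<subseteq> T \<inter> \<pi>R ` (Z \<inter> (A \<times> B) \<inter> WO Ob)"
          unfolding E_def by blast
        then have "interior (\<pi>R ` (Z \<inter> (E \<inter> WO Ob))) \<subseteq> interior (T \<inter> \<pi>R ` (Z \<inter> (A \<times> B) \<inter> WO Ob))"
          by (rule interior_mono)
        also have "\<dots> = T \<inter> interior (\<pi>R ` (Z \<inter> (A \<times> B) \<inter> WO Ob))"
          using interior_open[OF T(1)] by (simp only: interior_Int)
        also have "\<dots> \<subseteq> T \<inter> Dfun A B Ob" unfolding Dfun_def by blast
        finally have "interior (\<pi>R ` (Z \<inter> (E \<inter> WO Ob))) \<subseteq> T \<inter> Dfun A B Ob" .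
        then show ?thesis using ne by blast
      next
        case False
        then obtain y where "y \<in> T" "y \<notin> closure X" by blast
        then have "y \<in> T \<inter> Dfun A B Ob" unfolding Dfun_def X_def by blast
        then show ?thesis by blast
      qed
    qed
  qed
  define YLY where "YLY = \<Inter>\<D>"
  have resid: "residual YLY"
    unfolding residual_def
  proof (rule exI[of _ \<D>], intro conjI ballI)
    show "countable \<D>" by (rule Dcount)
    fix U assume "U \<in> \<D>"
    then obtain A B Ob where "A \<in> \<B>" "B \<in> \<B>" "Ob \<in> \<O>" "U = Dfun A B Ob" unfolding \<D>_def by auto
    then show "open U" "closure U = UNIV" using Dprop by auto
  next
    show "\<Inter>\<D> \<subseteq> YLY" unfolding YLY_def by simp
  qed
  have "\<exists>p. p \<in> Z \<and> p \<notin> Id"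
  proof (rule ccontr)
    assume "\<not> (\<exists>p. p \<in> Z \<and> p \<notin> Id)"
    then have "Z \<subseteq> Id" by blast
    moreover have "Id \<subseteq> Z" unfolding Id_def using Zmem by auto
    ultimately show False using assms(6) unfolding Z_def by blast
  qed
  then obtain a0 b0 where ab0: "(a0, b0) \<in> Z" "a0 \<noteq> b0" by (auto simp: Id_def)
  define d where "d = dist a0 b0 / 2"
  have d: "d > 0" using ab0 unfolding d_def by simp
  obtain O1 where O1: "O1 \<in> \<B>" "a0 \<in> O1" "O1 \<subseteq> ball a0 d" using base[of "ball a0 d" a0] d by auto
  obtain O2 where O2: "O2 \<in> \<B>" "b0 \<in> O2" "O2 \<subseteq> ball b0 d" using base[of "ball b0 d" b0] d by auto
  have O12: "O1 \<inter> O2 = {}"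
  proof (rule ccontr)
    assume "O1 \<inter> O2 \<noteq> {}"
    then obtain u where u: "u \<in> O1" "u \<in> O2" by blast
    have "dist a0 u < d" "dist b0 u < d" using u O1(3) O2(3) by auto
    then have "dist a0 b0 < 2 * d" by (smt (verit) dist_commute dist_triangle)
    then show False unfolding d_def by simp
  qed
  define Ost where "Ost = O1 \<times> O2"
  have Ost: "Ost \<in> \<O>" unfolding \<O>_def Ost_def using O1 O2 ab0 by blast
  have nodiag: "(u, u) \<notin> WO Ost" for u
  proof
    assume "(u, u) \<in> WO Ost"
    then obtain t where "diag_act actX t (u, u) \<in> O1 \<times> O2" unfolding WO_def Ost_def by (elim CollectE exE)
    then have "actX t u \<in> O1" "actX t u \<in> O2" unfolding diag_act_def by auto
    then show False using O12 by blast
  qed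
  have One: "\<O> \<noteq> {}" using Ost by blast
  have Bne: "\<B> \<noteq> {}" using base[of UNIV a0] by auto
  define Wseq where "Wseq m = WO (from_nat_into \<O> m)" for m
  have Wseq_in: "from_nat_into \<O> m \<in> \<O>" for m using from_nat_into[OF One] .
  define Bk where "Bk n = from_nat_into \<B> n" for n
  have Bko: "\<forall>n. open (Bk n)" unfolding Bk_def using from_nat_into[OF Bne] b2 by blast
  have rangeB: "range (from_nat_into \<B>) = \<B>" using range_from_nat_into[OF Bne b1] .
  have rangeO: "range (from_nat_into \<O>) = \<O>" using range_from_nat_into[OF One Ocount] .
  have main: "(\<forall>x\<in>\<pi> -` {y}. x islimpt (\<pi> -` {y})) \<and>
       (\<exists>B. B \<subseteq> \<pi> -` {y} \<and> uncountable B \<and> \<pi> -` {y} \<subseteq> closure B \<and>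
            LY_scrambled actX \<pi> (Rpi \<pi>) B)" if y: "y \<in> YLY" for y
  proof -
    define F where "F = \<pi> -` {y}"
    have yD: "y \<in> Dfun A B Ob" if "A \<in> \<B>" "B \<in> \<B>" "Ob \<in> \<O>" for A B Ob
      using y that unfolding YLY_def \<D>_def by blast
    have densy: "\<exists>a\<in>A'\<inter>F. \<exists>b\<in>B'\<inter>F. (a, b) \<in> WO Ob"
      if Ob: "Ob \<in> \<O>" and A': "open A'" "A' \<inter> F \<noteq> {}" and B': "open B'" "B' \<inter> F \<noteq> {}" for Ob A' B'
    proof -
      obtain a1 where a1: "a1 \<in> A'" "a1 \<in> F" using A' by blast
      obtain b1 where b1': "b1 \<in> B'" "b1 \<in> F" using B' by blast
      obtain A where A: "A \<in> \<B>" "a1 \<in> A" "A \<subseteq> A'" using base[OF A'(1) a1(1)] by blast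
      obtain B where B: "B \<in> \<B>" "b1 \<in> B" "B \<subseteq> B'" using base[OF B'(1) b1'(1)] by blast
      have "(a1, b1) \<in> Z \<inter> (A \<times> B)" using a1 b1' A B Zmem unfolding F_def by auto
      moreover have "\<pi>R (a1, b1) = y" using a1 unfolding F_def \<pi>R_def by simp
      ultimately have "y \<in> closure (\<pi>R ` (Z \<inter> (A \<times> B)))" using closure_subset by (metis image_eqI subsetD)
      then have "y \<in> interior (\<pi>R ` (Z \<inter> (A \<times> B) \<inter> WO Ob))" using yD[OF A(1) B(1) Ob] unfolding Dfun_def by blast
      then have "y \<in> \<pi>R ` (Z \<inter> (A \<times> B) \<inter> WO Ob)" using interior_subset by blast
      then obtain p where p: "p \<in> Z" "p \<in> A \<times> B" "p \<in> WO Ob" "\<pi>R p = y" by blast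
      obtain a b where pab: "p = (a, b)" by (cases p)
      have "\<pi> a = y" "\<pi> b = y" using p Zmem unfolding pab \<pi>R_def by auto
      then have "a \<in> A' \<inter> F" "b \<in> B' \<inter> F" using p A B unfolding pab F_def by auto
      then show ?thesis using p(3) unfolding pab by blast
    qed
    have perf: "\<forall>x\<in>F. x islimpt F"
    proof (intro ballI islimptI)
      fix x T assume x: "x \<in> F" and T: "x \<in> T" "open T"
      have "T \<inter> F \<noteq> {}" using x T by blast
      then obtain a b where ab: "a \<in> T \<inter> F" "b \<in> T \<inter> F" "(a, b) \<in> WO Ost"
        using densy[OF Ost T(2) _ T(2)] by blast
      then have "a \<noteq> b" using nodiag by blast
      show "\<exists>y\<in>F. y \<in> T \<and> y \<noteq> x"
      proof (cases "a = x")
        case True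
        then show ?thesis using ab \<open>a \<noteq> b\<close> by blast
      next
        case False
        then show ?thesis using ab by blast
      qed
    qed
    have Fclosed: "closed F" unfolding F_def
      using openv[OF contpi open_Compl[OF closed_singleton[of y]]] by (simp add: closed_def vimage_Compl[symmetric])
    have cF: "compact F" using compact_Int_closed[OF assms(1) Fclosed] by simp
    have "y \<in> range \<pi>" using surjpi by simp
    then obtain x0 where "y = \<pi> x0" by (rule rangeE)
    then have "x0 \<in> F" unfolding F_def by simp
    then have neF: "F \<noteq> {}" by blast
    have denseW: "\<forall>m A B. open A \<longrightarrow> open B \<longrightarrow> A \<inter> F \<noteq> {} \<longrightarrow> B \<inter> F \<noteq> {} \<longrightarrow> (\<exists>a\<in>A\<inter>F. \<exists>b\<in>B\<inter>F. (a,b) \<in> Wseq m)"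
    proof (intro allI impI)
      fix m A B assume h: "open A" "open B" "A \<inter> F \<noteq> {}" "B \<inter> F \<noteq> {}"
      show "\<exists>a\<in>A\<inter>F. \<exists>b\<in>B\<inter>F. (a,b) \<in> Wseq m"
        unfolding Wseq_def by (rule densy[OF Wseq_in h(1) h(3) h(2) h(4)])
    qed
    have Wo: "\<forall>m. open (Wseq m)"
    proof
      fix m
      have "open (from_nat_into \<O> m)" using Oprop[OF Wseq_in[of m]] by (rule conjunct1)
      then show "open (Wseq m)" unfolding Wseq_def by (rule WOopen)
    qed
    have Bkb: "\<forall>x\<in>F. \<forall>S. open S \<longrightarrow> x \<in> S \<longrightarrow> (\<exists>n. x \<in> Bk n \<and> Bk n \<subseteq> S)"
    proof (intro ballI allI impI)
      fix x S assume xS: "x \<in> F" "open S" "x \<in> S"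
      obtain B where B: "B \<in> \<B>" "x \<in> B" "B \<subseteq> S" using base[OF xS(2) xS(3)] by blast
      have "B \<in> range (from_nat_into \<B>)" using rangeB B(1) by simp
      then obtain n where "B = from_nat_into \<B> n" by (rule rangeE)
      then have "x \<in> Bk n \<and> Bk n \<subseteq> S" unfolding Bk_def using B by simp
      then show "\<exists>n. x \<in> Bk n \<and> Bk n \<subseteq> S" by (rule exI)
    qed
    obtain Bs where Bs: "Bs \<subseteq> F" "uncountable Bs" "F \<subseteq> closure Bs"
      "\<forall>x\<in>Bs. \<forall>x'\<in>Bs. x \<noteq> x' \<longrightarrow> (\<forall>m. (x,x') \<in> Wseq m)"
      using mycielski[OF cF neF perf denseW Wo Bko Bkb] by (elim exE conjE) blast
    have LY: "LY_scrambled actX \<pi> (Rpi \<pi>) Bs"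
      unfolding LY_scrambled_def LY_pair_def
    proof (intro ballI impI conjI)
      fix x x' assume xx: "x \<in> Bs" "x' \<in> Bs" "x \<noteq> x'"
      then show "(x, x') \<in> Rpi \<pi>" using Bs(1) unfolding F_def Rpi_def by auto
      show "Rpi \<pi> \<subseteq> closure (range (\<lambda>t. diag_act actX t (x, x')))"
      proof
        fix q assume q: "q \<in> Rpi \<pi>"
        show "q \<in> closure (range (\<lambda>t. diag_act actX t (x, x')))"
        proof (rule ccontr)
          define R where "R = range (\<lambda>t. diag_act actX t (x, x'))"
          assume "q \<notin> closure (range (\<lambda>t. diag_act actX t (x, x')))"
          then have qR: "q \<in> - closure R" unfolding R_def by simp
          have oR: "open (- closure R)" by (rule open_Compl[OF closed_closure])
          obtain A' B' where AB': "open A'" "open B'" "q \<in> A' \<times> B'" "A' \<times> B' \<subseteq> - closure R"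
            by (rule open_prod_elim[OF oR qR])
          have qAB: "fst q \<in> A'" "snd q \<in> B'" using AB'(3) by (auto simp: mem_Times_iff)
          obtain A where A: "A \<in> \<B>" "fst q \<in> A" "A \<subseteq> A'" using base[OF AB'(1) qAB(1)] by blast
          obtain B where B: "B \<in> \<B>" "snd q \<in> B" "B \<subseteq> B'" using base[OF AB'(2) qAB(2)] by blast
          have "q \<in> A \<times> B" using A B by (cases q) auto
          then have "Z \<inter> (A \<times> B) \<noteq> {}" using q unfolding Z_def by blast
          then have "A \<times> B \<in> \<O>" unfolding \<O>_def using A(1) B(1)
            by (intro CollectI exI[of _ A] exI[of _ B] conjI refl)
          then have "A \<times> B \<in> range (from_nat_into \<O>)" using rangeO by simp
          then obtain m where m: "A \<times> B = from_nat_into \<O> m" by (rule rangeE)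
          have "(x, x') \<in> Wseq m" using Bs(4) xx by blast
          then obtain t where "diag_act actX t (x, x') \<in> A \<times> B" unfolding Wseq_def WO_def m[symmetric] by (elim CollectE exE)
          moreover have "A \<times> B \<subseteq> A' \<times> B'" using A(3) B(3) by auto
          ultimately have "diag_act actX t (x, x') \<in> A' \<times> B'" by (rule rev_subsetD)
          then have "diag_act actX t (x, x') \<in> - closure R" using AB'(4) by (rule rev_subsetD)
          moreover have "diag_act actX t (x, x') \<in> closure R"
            unfolding R_def by (rule subsetD[OF closure_subset rangeI])
          ultimately show False by simp
        qed
      qed
    qed
    have "\<exists>B. B \<subseteq> \<pi> -` {y} \<and> uncountable B \<and> \<pi> -` {y} \<subseteq> closure B \<and> LY_scrambled actX \<pi> (Rpi \<pi>) B"
      unfolding F_def[symmetric] by (rule exI[of _ Bs], intro conjI Bs(1) Bs(2) Bs(3) LY)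
    then show ?thesis using perf unfolding F_def by (intro conjI)
  qed
  show ?thesis
    by (rule exI[of _ YLY], intro conjI ballI resid main)
qed

end
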